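(* Every topological space $X$ is $\Gamma$-embedded in its cone $\mathrm{Cone}(X)=([0,1]\times X)/(\{0\}\times X)$ (quotient topology); namely via the embedding $c\colon X\to\mathrm{Cone}(X)$, $x\mapsto 1x$, and the semigroup homomorphism $\sigma\colon\Gamma(X)\to\Gamma(\mathrm{Cone}(X))$ sending $f$ to $\sigma(f)\colon \eta((0,1]\times\mathrm{dom}(f))\to\eta((0,1]\times\mathrm{im}(f))$, $tx\mapsto tf(x)$.
   Context: $\eta\colon[0,1]\times X\to\mathrm{Cone}(X)$ is the quotient map and $tx=\eta(t,x)$. For a topological space $X$, $\Gamma(X)$ is the inverse monoid of homeomorphisms between open subsets of $X$ (including the empty map), with product $\psi\circ\phi\colon \phi^{-1}(\mathrm{dom}(\psi)\cap\mathrm{im}(\phi))\to\psi(\mathrm{dom}(\psi)\cap\mathrm{im}(\phi))$. Let $\Gamma(X)*X=\{(f,x)\in\Gamma(X)\times X: x\in\mathrm{dom}(f)\}$. $X$ is $\Gamma$-embedded in a space $Z$ if there exist a semigroup homomorphism $\sigma\colon\Gamma(X)\to\Gamma(Z)$ and a topological embedding $c\colon X\to Z$ such that for every $(f,x)\in\Gamma(X)*X$ one has $c(x)\in\mathrm{dom}(\sigma(f))$ and $\sigma(f)(c(x))=c(f(x))$. *)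

theory Defs
  imports "HOL-Analysis.Analysis"
begin

definition quotient_topology :: "'a topology \<Rightarrow> ('a \<Rightarrow> 'b) \<Rightarrow> 'b topology" where
  "quotient_topology X q =
     topology (\<lambda>U. U \<subseteq> q ` topspace X \<and> openin X {x \<in> topspace X. q x \<in> U})"

definition cone_rel :: "'a topology \<Rightarrow> ((real \<times> 'a) \<times> (real \<times> 'a)) set" where
  "cone_rel X = {((s, x), (t, y)). s \<in> {0..1} \<and> t \<in> {0..1} \<and> x \<in> topspace X \<and> y \<in> topspace X
                   \<and> ((s = 0 \<and> t = 0) \<or> (s = t \<and> x = y))}"

text \<open>The quotient map eta : [0,1] x X -> Cone(X); points of the cone are equivalence classes.
  cone_pt X t x is the point written t x in the paper.\<close>
definition cone_eta :: "'a topology \<Rightarrow> real \<times> 'a \<Rightarrow> (real \<times> 'a) set" where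
  "cone_eta X p = cone_rel X `` {p}"

definition cone_pt :: "'a topology \<Rightarrow> real \<Rightarrow> 'a \<Rightarrow> (real \<times> 'a) set" where
  "cone_pt X t x = cone_eta X (t, x)"

definition cone_topology :: "'a topology \<Rightarrow> (real \<times> 'a) set topology" where
  "cone_topology X = quotient_topology (prod_topology (top_of_set {0..1}) X) (cone_eta X)"

text \<open>Gamma(X): homeomorphisms between open subsets of X, as partial maps (the empty map included).\<close>
definition Gamma :: "'a topology \<Rightarrow> ('a \<rightharpoonup> 'a) set" where
  "Gamma X = {f. openin X (dom f) \<and> openin X (ran f) \<and>
                 homeomorphic_map (subtopology X (dom f)) (subtopology X (ran f)) (\<lambda>x. the (f x))}"

text \<open>X is Gamma-embedded in Z via sigma and c. The product in Gamma is composition of partial maps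
  (map_comp g f has domain f^-1(dom g \<inter> im f)).\<close>
definition Gamma_embedding_via ::
    "'a topology \<Rightarrow> 'b topology \<Rightarrow> (('a \<rightharpoonup> 'a) \<Rightarrow> ('b \<rightharpoonup> 'b)) \<Rightarrow> ('a \<Rightarrow> 'b) \<Rightarrow> bool" where
  "Gamma_embedding_via X Z \<sigma> c \<longleftrightarrow>
     (\<forall>f\<in>Gamma X. \<sigma> f \<in> Gamma Z) \<and>
     (\<forall>f\<in>Gamma X. \<forall>g\<in>Gamma X. \<sigma> (g \<circ>\<^sub>m f) = \<sigma> g \<circ>\<^sub>m \<sigma> f) \<and>
     embedding_map X Z c \<and>
     (\<forall>f\<in>Gamma X. \<forall>x\<in>dom f. c x \<in> dom (\<sigma> f) \<and> \<sigma> f (c x) = Some (c (the (f x))))"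

definition Gamma_embedded :: "'a topology \<Rightarrow> 'b topology \<Rightarrow> bool" where
  "Gamma_embedded X Z \<longleftrightarrow> (\<exists>\<sigma> c. Gamma_embedding_via X Z \<sigma> c)"

definition cone_incl :: "'a topology \<Rightarrow> 'a \<Rightarrow> (real \<times> 'a) set" where
  "cone_incl X x = cone_pt X 1 x"

definition cone_sigma :: "'a topology \<Rightarrow> ('a \<rightharpoonup> 'a) \<Rightarrow> ((real \<times> 'a) set \<rightharpoonup> (real \<times> 'a) set)" where
  "cone_sigma X f p =
     (if \<exists>t x. t \<in> {0<..1} \<and> x \<in> dom f \<and> p = cone_pt X t x
      then Some (let (t, x) = (SOME (t, x). t \<in> {0<..1} \<and> x \<in> dom f \<and> p = cone_pt X t x)
                 in cone_pt X t (the (f x)))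
      else None)"

end

theory Submission
  imports Defs
begin

lemma istopology_quot:
  "istopology (\<lambda>U. U \<subseteq> q ` topspace X \<and> openin X {x \<in> topspace X. q x \<in> U})"
  unfolding istopology_def
proof (rule conjI; intro allI impI)
  fix S T assume "S \<subseteq> q ` topspace X \<and> openin X {x \<in> topspace X. q x \<in> S}"
    "T \<subseteq> q ` topspace X \<and> openin X {x \<in> topspace X. q x \<in> T}"
  moreover have "{x \<in> topspace X. q x \<in> S \<inter> T} = {x \<in> topspace X. q x \<in> S} \<inter> {x \<in> topspace X. q x \<in> T}" by auto
  ultimately show "S \<inter> T \<subseteq> q ` topspace X \<and> openin X {x \<in> topspace X. q x \<in> S \<inter> T}"
    by auto
next
  fix K assume K: "\<forall>S\<in>K. S \<subseteq> q ` topspace X \<and> openin X {x \<in> topspace X. q x \<in> S}"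
  have "{x \<in> topspace X. q x \<in> \<Union>K} = \<Union>((\<lambda>S. {x \<in> topspace X. q x \<in> S}) ` K)" by auto
  moreover have "openin X (\<Union>((\<lambda>S. {x \<in> topspace X. q x \<in> S}) ` K))"
    using K by (intro openin_Union) auto
  ultimately show "\<Union>K \<subseteq> q ` topspace X \<and> openin X {x \<in> topspace X. q x \<in> \<Union>K}"
    using K by auto
qed

lemma openin_quot:
  "openin (quotient_topology X q) U \<longleftrightarrow> U \<subseteq> q ` topspace X \<and> openin X {x \<in> topspace X. q x \<in> U}"
  unfolding quotient_topology_def using istopology_quot[of q X] by simp

lemma topspace_quot: "topspace (quotient_topology X q) = q ` topspace X"
proof -
  have "openin (quotient_topology X q) (q ` topspace X)"
    unfolding openin_quot by (auto intro: openin_subopen[THEN iffD2] simp: openin_topspace)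
  moreover have "\<And>U. openin (quotient_topology X q) U \<Longrightarrow> U \<subseteq> q ` topspace X"
    unfolding openin_quot by auto
  ultimately show ?thesis
    by (metis openin_subset openin_topspace subset_antisym)
qed

lemma quotient_map_quot: "quotient_map X (quotient_topology X q) q"
  unfolding quotient_map_def topspace_quot openin_quot by auto

lemma topspace_P: "topspace (prod_topology (top_of_set {0..1}) X) = {0..1::real} \<times> topspace X"
  by simp

lemma cone_eta_self:
  "p \<in> {0..1} \<times> topspace X \<Longrightarrow> p \<in> cone_eta X p"
  unfolding cone_eta_def cone_rel_def by (cases p) auto

lemma cone_pt_pos:
  "t \<in> {0<..1} \<Longrightarrow> x \<in> topspace X \<Longrightarrow> cone_pt X t x = {(t, x)}"
  unfolding cone_pt_def cone_eta_def cone_rel_def by auto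

lemma cone_pt_inj:
  assumes "t \<in> {0<..1}" "x \<in> topspace X" "cone_pt X s y = cone_pt X t x"
  shows "s = t \<and> y = x"
proof -
  have "cone_pt X s y \<noteq> {}" using assms cone_pt_pos by (metis empty_iff singletonI)
  then have "(s, y) \<in> {0..1} \<times> topspace X"
    unfolding cone_pt_def cone_eta_def cone_rel_def by auto
  then have "(s, y) \<in> cone_pt X s y" using cone_eta_self cone_pt_def by metis
  then have "(s, y) \<in> {(t, x)}" using assms cone_pt_pos by metis
  then show ?thesis by simp
qed

lemma cone_eta_pt: "cone_eta X p = cone_pt X (fst p) (snd p)"
  by (simp add: cone_pt_def)


lemma quotient_map_cone:
  "quotient_map (prod_topology (top_of_set {0..1}) X) (cone_topology X) (cone_eta X)"
  unfolding cone_topology_def by (rule quotient_map_quot)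

lemma topspace_cone: "topspace (cone_topology X) = cone_eta X ` ({0..1} \<times> topspace X)"
  unfolding cone_topology_def topspace_quot by simp

lemma cone_eta_pair: "cone_eta X (t, x) = cone_pt X t x"
  by (simp add: cone_pt_def)

lemma cone_pre:
  assumes "D \<subseteq> topspace X" "T \<subseteq> {0<..1}"
  shows "{p \<in> {0..1} \<times> topspace X. cone_eta X p \<in> cone_eta X ` (T \<times> D)} = T \<times> D"
proof -
  have "p \<in> T \<times> D" if "p \<in> {0..1} \<times> topspace X" "cone_eta X p = cone_eta X (t, x)" "t \<in> T" "x \<in> D" for p t x
  proof -
    obtain s y where p: "p = (s, y)" by fastforce
    have tx: "t \<in> {0<..1}" "x \<in> topspace X" using that assms by auto
    have "cone_pt X s y = cone_pt X t x" using that p by (simp add: cone_eta_pair)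
    then have "s = t \<and> y = x" using cone_pt_inj[OF tx] by blast
    then show ?thesis using p that by simp
  qed
  note * = this
  show ?thesis
  proof (rule set_eqI, rule iffI)
    fix p assume "p \<in> {p \<in> {0..1} \<times> topspace X. cone_eta X p \<in> cone_eta X ` (T \<times> D)}"
    then obtain q where "p \<in> {0..1} \<times> topspace X" "q \<in> T \<times> D" "cone_eta X p = cone_eta X q" by blast
    then show "p \<in> T \<times> D" using *[of p "fst q" "snd q"] by (cases q) simp
  next
    fix p assume p: "p \<in> T \<times> D"
    then have "p \<in> {0..1} \<times> topspace X" using assms by (auto simp: mem_Times_iff)
    then show "p \<in> {p \<in> {0..1} \<times> topspace X. cone_eta X p \<in> cone_eta X ` (T \<times> D)}" using p by blast
  qed
qed

lemma image_eta_E: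
  assumes "p \<in> cone_eta X ` (T \<times> D)"
  obtains t x where "t \<in> T" "x \<in> D" "p = cone_pt X t x"
  using assms by (auto simp: cone_eta_pair)

lemma image_eta_I:
  "t \<in> T \<Longrightarrow> x \<in> D \<Longrightarrow> cone_pt X t x \<in> cone_eta X ` (T \<times> D)"
  by (metis SigmaI cone_eta_pair image_eqI)

lemma sigma_eval:
  assumes "dom f \<subseteq> topspace X" "t \<in> {0<..1}" "x \<in> dom f"
  shows "cone_sigma X f (cone_pt X t x) = Some (cone_pt X t (the (f x)))"
proof -
  let ?Q = "\<lambda>(t', x'). t' \<in> {0<..1} \<and> x' \<in> dom f \<and> cone_pt X t x = cone_pt X t' x'"
  have "(SOME p. ?Q p) = (t, x)"
  proof (rule some_equality)
    show "?Q (t, x)" using assms by simp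
    fix p assume "?Q p"
    then show "p = (t, x)" using cone_pt_inj[of t x X "fst p" "snd p"] assms
      by (cases p) auto
  qed
  moreover have "\<exists>t' x'. t' \<in> {0<..1} \<and> x' \<in> dom f \<and> cone_pt X t x = cone_pt X t' x'"
    using assms by blast
  ultimately show ?thesis unfolding cone_sigma_def by simp
qed

lemma sigma_none:
  assumes "p \<notin> cone_eta X ` ({0<..1} \<times> dom f)"
  shows "cone_sigma X f p = None"
  using assms unfolding cone_sigma_def by (auto simp: cone_eta_pair[symmetric])

lemma sigma_pt_none:
  assumes "dom f \<subseteq> topspace X" "t \<in> {0<..1}" "x \<in> topspace X" "x \<notin> dom f"
  shows "cone_sigma X f (cone_pt X t x) = None"
proof (rule sigma_none, rule notI)
  assume "cone_pt X t x \<in> cone_eta X ` ({0<..1} \<times> dom f)"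
  then obtain t' x' where "t' \<in> {0<..1}" "x' \<in> dom f" "cone_pt X t x = cone_pt X t' x'"
    by (rule image_eta_E)
  then show False using cone_pt_inj[of t x X t' x'] assms by auto
qed

lemma dom_sigma:
  assumes "dom f \<subseteq> topspace X"
  shows "dom (cone_sigma X f) = cone_eta X ` ({0<..1} \<times> dom f)"
proof
  show "dom (cone_sigma X f) \<subseteq> cone_eta X ` ({0<..1} \<times> dom f)"
  proof
    fix p assume "p \<in> dom (cone_sigma X f)"
    then have "cone_sigma X f p \<noteq> None" by (simp add: domIff)
    then show "p \<in> cone_eta X ` ({0<..1} \<times> dom f)" using sigma_none by metis
  qed
  show "cone_eta X ` ({0<..1} \<times> dom f) \<subseteq> dom (cone_sigma X f)"
  proof
    fix p assume "p \<in> cone_eta X ` ({0<..1} \<times> dom f)"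
    then obtain t x where tx: "t \<in> {0<..1}" "x \<in> dom f" "p = cone_pt X t x"
      by (rule image_eta_E)
    then have "cone_sigma X f p = Some (cone_pt X t (the (f x)))" using sigma_eval[OF assms] by simp
    then show "p \<in> dom (cone_sigma X f)" by (simp add: domIff)
  qed
qed

lemma ran_sigma:
  assumes "dom f \<subseteq> topspace X"
  shows "ran (cone_sigma X f) = cone_eta X ` ({0<..1} \<times> ran f)"
proof
  show "ran (cone_sigma X f) \<subseteq> cone_eta X ` ({0<..1} \<times> ran f)"
  proof
    fix q assume "q \<in> ran (cone_sigma X f)"
    then obtain p where p: "cone_sigma X f p = Some q" unfolding ran_def by blast
    then have "p \<in> dom (cone_sigma X f)" by (simp add: domIff)
    then have "p \<in> cone_eta X ` ({0<..1} \<times> dom f)" using dom_sigma[OF assms] by simp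
    then obtain t x where tx: "t \<in> {0<..1}" "x \<in> dom f" "p = cone_pt X t x" by (rule image_eta_E)
    have "cone_sigma X f p = Some (cone_pt X t (the (f x)))" using sigma_eval[OF assms tx(1,2)] tx(3) by simp
    then have q: "q = cone_pt X t (the (f x))" using p by simp
    have "the (f x) \<in> ran f" using tx(2) by (auto simp: ran_def)
    then have "(t, the (f x)) \<in> {0<..1} \<times> ran f" using tx(1) by simp
    then have "cone_eta X (t, the (f x)) \<in> cone_eta X ` ({0<..1} \<times> ran f)" by (rule imageI)
    then show "q \<in> cone_eta X ` ({0<..1} \<times> ran f)" using q by (simp add: cone_eta_pair)
  qed
  show "cone_eta X ` ({0<..1} \<times> ran f) \<subseteq> ran (cone_sigma X f)"
  proof
    fix q assume "q \<in> cone_eta X ` ({0<..1} \<times> ran f)"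
    then obtain t y where ty: "t \<in> {0<..1}" "y \<in> ran f" "q = cone_pt X t y" by (rule image_eta_E)
    then obtain x where x: "f x = Some y" unfolding ran_def by blast
    then have xd: "x \<in> dom f" by (simp add: domIff)
    have "cone_sigma X f (cone_pt X t x) = Some (cone_pt X t (the (f x)))" using sigma_eval[OF assms ty(1) xd] .
    then have "cone_sigma X f (cone_pt X t x) = Some q" using x ty(3) by simp
    then show "q \<in> ran (cone_sigma X f)" unfolding ran_def by blast
  qed
qed

lemma dom_map_comp_sub: "dom (g \<circ>\<^sub>m f) \<subseteq> dom f"
  unfolding dom_def map_comp_def by (auto split: option.splits)

lemma sigma_hom:
  assumes "dom f \<subseteq> topspace X" "ran f \<subseteq> topspace X" "dom g \<subseteq> topspace X"
  shows "cone_sigma X (g \<circ>\<^sub>m f) = cone_sigma X g \<circ>\<^sub>m cone_sigma X f"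
proof
  fix p
  have dgf: "dom (g \<circ>\<^sub>m f) \<subseteq> topspace X" by (rule subset_trans[OF dom_map_comp_sub assms(1)])
  show "cone_sigma X (g \<circ>\<^sub>m f) p = (cone_sigma X g \<circ>\<^sub>m cone_sigma X f) p"
  proof (cases "p \<in> cone_eta X ` ({0<..1} \<times> dom f)")
    case True
    then obtain t x where tx: "t \<in> {0<..1}" "x \<in> dom f" "p = cone_pt X t x" by (rule image_eta_E)
    then obtain y where y: "f x = Some y" by auto
    have yX: "y \<in> topspace X" using y assms(2) by (auto simp: ran_def)
    have sf: "cone_sigma X f p = Some (cone_pt X t y)" using sigma_eval[OF assms(1) tx(1,2)] tx(3) y by simp
    have rhs: "(cone_sigma X g \<circ>\<^sub>m cone_sigma X f) p = cone_sigma X g (cone_pt X t y)"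
      using sf by (simp add: map_comp_def)
    show ?thesis
    proof (cases "y \<in> dom g")
      case True
      have gfx: "(g \<circ>\<^sub>m f) x = g y" using y by (simp add: map_comp_def)
      have "x \<in> dom (g \<circ>\<^sub>m f)" using True gfx by (simp add: domIff)
      then have "cone_sigma X (g \<circ>\<^sub>m f) p = Some (cone_pt X t (the (g y)))"
        using sigma_eval[OF dgf tx(1)] tx(3) gfx by simp
      moreover have "cone_sigma X g (cone_pt X t y) = Some (cone_pt X t (the (g y)))"
        using sigma_eval[OF assms(3) tx(1) True] .
      ultimately show ?thesis using rhs by simp
    next
      case False
      have gfx: "(g \<circ>\<^sub>m f) x = g y" using y by (simp add: map_comp_def)
      have "x \<notin> dom (g \<circ>\<^sub>m f)" using False gfx by (simp add: domIff)
      moreover have "x \<in> topspace X" using tx assms(1) by auto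
      ultimately have "cone_sigma X (g \<circ>\<^sub>m f) p = None"
        using sigma_pt_none[OF dgf tx(1)] tx(3) by simp
      moreover have "cone_sigma X g (cone_pt X t y) = None"
        using sigma_pt_none[OF assms(3) tx(1) yX False] .
      ultimately show ?thesis using rhs by simp
    qed
  next
    case False
    have "cone_eta X ` ({0<..1} \<times> dom (g \<circ>\<^sub>m f)) \<subseteq> cone_eta X ` ({0<..1} \<times> dom f)"
      by (intro image_mono Sigma_mono order_refl dom_map_comp_sub)
    then have "p \<notin> cone_eta X ` ({0<..1} \<times> dom (g \<circ>\<^sub>m f))" using False by blast
    then have "cone_sigma X (g \<circ>\<^sub>m f) p = None" by (rule sigma_none)
    moreover have "cone_sigma X f p = None" using False by (rule sigma_none)
    ultimately show ?thesis by (simp add: map_comp_def)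
  qed
qed

lemma openin_half: "openin (top_of_set {0..1::real}) {0<..1}"
  unfolding openin_open by (rule exI[of _ "{0<..}"]) auto

lemma openin_V:
  assumes "openin X D"
  shows "openin (cone_topology X) (cone_eta X ` ({0<..1} \<times> D))"
proof -
  have D: "D \<subseteq> topspace X" using assms by (rule openin_subset)
  have "cone_eta X ` ({0<..1} \<times> D) \<subseteq> cone_eta X ` topspace (prod_topology (top_of_set {0..1}) X)"
    using D by (intro image_mono) auto
  moreover have "{p \<in> topspace (prod_topology (top_of_set {0..1}) X). cone_eta X p \<in> cone_eta X ` ({0<..1} \<times> D)}
      = {0<..1} \<times> D"
    unfolding topspace_P by (rule cone_pre[OF D]) simp
  moreover have "openin (prod_topology (top_of_set {0..1::real}) X) ({0<..1} \<times> D)"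
    unfolding openin_prod_Times_iff using openin_half assms by blast
  ultimately show ?thesis unfolding cone_topology_def openin_quot by simp
qed

lemma quot_restr:
  assumes "openin X D"
  shows "quotient_map (subtopology (prod_topology (top_of_set {0..1}) X) ({0<..1} \<times> D))
           (subtopology (cone_topology X) (cone_eta X ` ({0<..1} \<times> D))) (cone_eta X)"
proof (rule quotient_map_restriction[OF quotient_map_cone])
  have D: "D \<subseteq> topspace X" using assms by (rule openin_subset)
  show "{p \<in> topspace (prod_topology (top_of_set {0..1}) X). cone_eta X p \<in> cone_eta X ` ({0<..1} \<times> D)}
      = {0<..1} \<times> D"
    unfolding topspace_P by (rule cone_pre[OF D]) simp
  show "openin (cone_topology X) (cone_eta X ` ({0<..1} \<times> D)) \<or> closedin (cone_topology X) (cone_eta X ` ({0<..1} \<times> D))"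
    using openin_V[OF assms] by simp
qed

lemma cont_sigma:
  assumes D: "openin X D" and R: "openin X R" and dF: "dom F = D"
    and c: "continuous_map (subtopology X D) (subtopology X R) (\<lambda>x. the (F x))"
  shows "continuous_map (subtopology (cone_topology X) (cone_eta X ` ({0<..1} \<times> D)))
           (subtopology (cone_topology X) (cone_eta X ` ({0<..1} \<times> R))) (\<lambda>p. the (cone_sigma X F p))"
proof -
  let ?P = "prod_topology (top_of_set {0..1::real}) X"
  let ?h = "\<lambda>p. (fst p, the (F (snd p)))"
  have h: "continuous_map (subtopology ?P ({0<..1} \<times> D)) (subtopology ?P ({0<..1} \<times> R)) ?h"
    unfolding subtopology_Times
    by (intro continuous_map_pairedI continuous_map_fst
        continuous_map_compose[OF continuous_map_snd c, unfolded o_def])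
  have comp: "continuous_map (subtopology ?P ({0<..1} \<times> D))
       (subtopology (cone_topology X) (cone_eta X ` ({0<..1} \<times> R))) (cone_eta X \<circ> ?h)"
    by (rule continuous_map_compose[OF h quotient_imp_continuous_map[OF quot_restr[OF R]]])
  have Dsub: "dom F \<subseteq> topspace X" using dF openin_subset[OF D] by simp
  have eq: "(cone_eta X \<circ> ?h) p = ((\<lambda>p. the (cone_sigma X F p)) \<circ> cone_eta X) p"
    if "p \<in> topspace (subtopology ?P ({0<..1} \<times> D))" for p
  proof -
    obtain t x where p: "p = (t, x)" by fastforce
    have tx: "t \<in> {0<..1}" "x \<in> dom F" using that p dF by auto
    show ?thesis using sigma_eval[OF Dsub tx] p by (simp add: cone_eta_pair)
  qed
  show ?thesis
    by (rule continuous_compose_quotient_map[OF quot_restr[OF D] continuous_map_eq[OF comp eq]])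
qed

lemma sigma_Gamma:
  assumes f: "f \<in> Gamma X"
  shows "cone_sigma X f \<in> Gamma (cone_topology X)"
proof -
  have oD: "openin X (dom f)" and oR: "openin X (ran f)"
    and hm: "homeomorphic_map (subtopology X (dom f)) (subtopology X (ran f)) (\<lambda>x. the (f x))"
    using f unfolding Gamma_def by auto
  have Dsub: "dom f \<subseteq> topspace X" using openin_subset[OF oD] .
  have Rsub: "ran f \<subseteq> topspace X" using openin_subset[OF oR] .
  obtain g where g: "homeomorphic_maps (subtopology X (dom f)) (subtopology X (ran f)) (\<lambda>x. the (f x)) g"
    using hm homeomorphic_map_maps by blast
  have cf: "continuous_map (subtopology X (dom f)) (subtopology X (ran f)) (\<lambda>x. the (f x))"
    and cg: "continuous_map (subtopology X (ran f)) (subtopology X (dom f)) g"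
    and gf: "\<And>x. x \<in> dom f \<Longrightarrow> g (the (f x)) = x"
    and fg: "\<And>y. y \<in> ran f \<Longrightarrow> the (f (g y)) = y"
    using g Dsub Rsub unfolding homeomorphic_maps_def by (auto simp: Int_absorb1)
  have gD: "\<And>y. y \<in> ran f \<Longrightarrow> g y \<in> dom f"
    using continuous_map_image_subset_topspace[OF cg] Rsub Dsub by (auto simp: Int_absorb1)
  have fR: "\<And>x. x \<in> dom f \<Longrightarrow> the (f x) \<in> ran f"
    by (auto simp: ran_def)
  define G where "G y = (if y \<in> ran f then Some (g y) else None)" for y
  have dG: "dom G = ran f" by (auto simp: G_def dom_def)
  have tG: "\<And>y. y \<in> ran f \<Longrightarrow> the (G y) = g y" by (simp add: G_def)
  have cG: "continuous_map (subtopology X (ran f)) (subtopology X (dom f)) (\<lambda>y. the (G y))"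
    by (rule continuous_map_eq[OF cg]) (simp add: tG)
  have GDsub: "dom G \<subseteq> topspace X" using dG Rsub by simp
  let ?VD = "cone_eta X ` ({0<..1} \<times> dom f)" and ?VR = "cone_eta X ` ({0<..1} \<times> ran f)"
  have c1: "continuous_map (subtopology (cone_topology X) ?VD) (subtopology (cone_topology X) ?VR)
              (\<lambda>p. the (cone_sigma X f p))"
    by (rule cont_sigma[OF oD oR refl cf])
  have c2: "continuous_map (subtopology (cone_topology X) ?VR) (subtopology (cone_topology X) ?VD)
              (\<lambda>p. the (cone_sigma X G p))"
    by (rule cont_sigma[OF oR oD dG cG])
  have VDsub: "?VD \<subseteq> topspace (cone_topology X)" using Dsub by (auto simp: topspace_cone)
  have VRsub: "?VR \<subseteq> topspace (cone_topology X)" using Rsub by (auto simp: topspace_cone)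
  have id1: "the (cone_sigma X G (the (cone_sigma X f p))) = p" if pv: "p \<in> ?VD" for p
  proof -
    obtain t x where tx: "t \<in> {0<..1}" "x \<in> dom f" "p = cone_pt X t x"
      using pv by (rule image_eta_E)
    have "the (cone_sigma X f p) = cone_pt X t (the (f x))" using sigma_eval[OF Dsub tx(1,2)] tx(3) by simp
    moreover have "the (f x) \<in> dom G" using fR[OF tx(2)] dG by simp
    ultimately show ?thesis using sigma_eval[OF GDsub tx(1)] tG fR tx gf by simp
  qed
  have id2: "the (cone_sigma X f (the (cone_sigma X G q))) = q" if qv: "q \<in> ?VR" for q
  proof -
    obtain t y where ty: "t \<in> {0<..1}" "y \<in> ran f" "q = cone_pt X t y"
      using qv by (rule image_eta_E)
    have "the (cone_sigma X G q) = cone_pt X t (g y)"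
      using sigma_eval[OF GDsub ty(1)] ty(2,3) dG tG by simp
    then show ?thesis using sigma_eval[OF Dsub ty(1) gD[OF ty(2)]] fg[OF ty(2)] ty(3) by simp
  qed
  have "homeomorphic_maps (subtopology (cone_topology X) ?VD) (subtopology (cone_topology X) ?VR)
          (\<lambda>p. the (cone_sigma X f p)) (\<lambda>p. the (cone_sigma X G p))"
    unfolding homeomorphic_maps_def using c1 c2 id1 id2 VDsub VRsub by (auto simp: Int_absorb1)
  then have "homeomorphic_map (subtopology (cone_topology X) ?VD) (subtopology (cone_topology X) ?VR)
          (\<lambda>p. the (cone_sigma X f p))"
    using homeomorphic_map_maps by blast
  then show ?thesis
    unfolding Gamma_def using dom_sigma[OF Dsub] ran_sigma[OF Dsub] openin_V[OF oD] openin_V[OF oR]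
    by simp
qed

lemma incl_embedding: "embedding_map X (cone_topology X) (cone_incl X)"
proof -
  let ?P = "prod_topology (top_of_set {0..1::real}) X"
  let ?W = "cone_eta X ` ({1} \<times> topspace X)"
  have pre: "{p \<in> topspace ?P. cone_eta X p \<in> ?W} = {1} \<times> topspace X"
    unfolding topspace_P by (rule cone_pre) auto
  have c1: "closedin (top_of_set {0..1::real}) {1}"
    unfolding closedin_closed by (rule exI[of _ "{1}"]) auto
  have cP: "closedin ?P ({1} \<times> topspace X)"
    using c1 by (simp add: closedin_prod_Times_iff)
  have Wsub: "?W \<subseteq> topspace (cone_topology X)" by (auto simp: topspace_cone)
  have qc: "\<forall>U. U \<subseteq> topspace (cone_topology X) \<longrightarrow>
      (closedin ?P {x. x \<in> topspace ?P \<and> cone_eta X x \<in> U} \<longleftrightarrow> closedin (cone_topology X) U)"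
    using quotient_map_closedin[THEN iffD1, OF quotient_map_cone, of X] by (rule conjunct2)
  have "closedin ?P {x. x \<in> topspace ?P \<and> cone_eta X x \<in> ?W} \<longleftrightarrow> closedin (cone_topology X) ?W"
    using qc Wsub by blast
  then have cW: "closedin (cone_topology X) ?W"
    using pre cP by simp
  have q: "quotient_map (subtopology ?P ({1} \<times> topspace X)) (subtopology (cone_topology X) ?W) (cone_eta X)"
    by (rule quotient_map_restriction[OF quotient_map_cone pre]) (simp add: cW)
  have inj: "inj_on (cone_eta X) (topspace (subtopology ?P ({1} \<times> topspace X)))"
  proof (rule inj_onI)
    fix a b assume a: "a \<in> topspace (subtopology ?P ({1} \<times> topspace X))"
      and b: "b \<in> topspace (subtopology ?P ({1} \<times> topspace X))" and e: "cone_eta X a = cone_eta X b"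
    have a1: "fst a = 1" "snd a \<in> topspace X" using a by auto
    have "1 \<in> {0<..1::real}" by simp
    then have "fst b = fst a \<and> snd b = snd a"
      using cone_pt_inj[of 1 "snd a" X "fst b" "snd b"] e a1 by (simp add: cone_eta_pt)
    then show "a = b" by (simp add: prod_eq_iff)
  qed
  have h1: "homeomorphic_map (subtopology ?P ({1} \<times> topspace X)) (subtopology (cone_topology X) ?W) (cone_eta X)"
    unfolding homeomorphic_map_def using q inj by simp
  have "homeomorphic_maps X (subtopology ?P ({1} \<times> topspace X)) (\<lambda>x. (1, x)) snd"
    unfolding homeomorphic_maps_def
  proof (intro conjI)
    have c1: "continuous_map X (top_of_set {0..1::real}) (\<lambda>x. 1)" by simp
    have c2: "continuous_map X X (\<lambda>x. x)" using continuous_map_id unfolding id_def .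
    have "continuous_map X ?P (\<lambda>x. (1, x))" by (rule continuous_map_pairedI[OF c1 c2])
    moreover have "(\<lambda>x. (1::real, x)) \<in> topspace X \<rightarrow> {1} \<times> topspace X" by simp
    ultimately show "continuous_map X (subtopology ?P ({1} \<times> topspace X)) (\<lambda>x. (1, x))"
      unfolding continuous_map_in_subtopology by blast
    show "continuous_map (subtopology ?P ({1} \<times> topspace X)) X snd"
      by (rule continuous_map_from_subtopology[OF continuous_map_snd])
  qed (simp_all add: mem_Times_iff prod_eq_iff)
  then have h2: "homeomorphic_map X (subtopology ?P ({1} \<times> topspace X)) (\<lambda>x. (1, x))"
    using homeomorphic_map_maps by blast
  have h: "homeomorphic_map X (subtopology (cone_topology X) ?W) (cone_eta X \<circ> (\<lambda>x. (1, x)))"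
    by (rule homeomorphic_map_compose[OF h2 h1])
  have im: "cone_incl X ` topspace X = ?W"
    unfolding cone_incl_def cone_pt_def by auto
  show ?thesis unfolding embedding_map_def im
    by (rule homeomorphic_map_eq[OF h]) (simp add: cone_incl_def cone_eta_pair)
qed

theorem proposition2p7:
  fixes X :: "'a topology"
  shows "Gamma_embedding_via X (cone_topology X) (cone_sigma X) (cone_incl X)
         \<and> Gamma_embedded X (cone_topology X)"
proof -
  have sub: "dom f \<subseteq> topspace X" "ran f \<subseteq> topspace X" if "f \<in> Gamma X" for f
  proof -
    have "openin X (dom f)" "openin X (ran f)" using that unfolding Gamma_def by simp_all
    then show "dom f \<subseteq> topspace X" "ran f \<subseteq> topspace X" by (simp_all add: openin_subset)
  qed
  have "Gamma_embedding_via X (cone_topology X) (cone_sigma X) (cone_incl X)"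
    unfolding Gamma_embedding_via_def
  proof (intro conjI ballI)
    show "cone_sigma X f \<in> Gamma (cone_topology X)" if "f \<in> Gamma X" for f
      using sigma_Gamma[OF that] .
    show "cone_sigma X (g \<circ>\<^sub>m f) = cone_sigma X g \<circ>\<^sub>m cone_sigma X f" if "f \<in> Gamma X" "g \<in> Gamma X" for f g
      by (rule sigma_hom[OF sub(1)[OF that(1)] sub(2)[OF that(1)] sub(1)[OF that(2)]])
    show "embedding_map X (cone_topology X) (cone_incl X)" by (rule incl_embedding)
    fix f x assume f: "f \<in> Gamma X" and x: "x \<in> dom f"
    have "cone_sigma X f (cone_incl X x) = Some (cone_incl X (the (f x)))"
      unfolding cone_incl_def by (rule sigma_eval[OF sub(1)[OF f] _ x]) simp
    then show "cone_incl X x \<in> dom (cone_sigma X f)"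
      and "cone_sigma X f (cone_incl X x) = Some (cone_incl X (the (f x)))" by auto
  qed
  then show ?thesis unfolding Gamma_embedded_def by blast
qed

end
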